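(* Let $f:\{0,1\}^n\to\{0,1\}$ be $\epsilon$-far from being $t$-symmetric. Then every $J\subseteq[n]$ with $|J|\ge t$ satisfies $\mathrm{SymInf}_f(J)\ge\epsilon$.
   Context: $\mathcal{S}_J$ is the set of permutations of $[n]$ fixing every element outside $J$; $\pi x$ is the vector whose $\pi(i)$-th coordinate is $x_i$. $f$ is $J$-symmetric if $f(\pi x)=f(x)$ for all $x$, $\pi\in\mathcal{S}_J$; $t$-symmetric if $J$-symmetric for some $|J|\ge t$. $f$ is $\epsilon$-far from being $t$-symmetric if $\Pr_x[f(x)\ne g(x)]\ge\epsilon$ for all $t$-symmetric $g$. $\mathrm{SymInf}_f(J)=\Pr_{x,\pi}[f(x)\ne f(\pi x)]$, $x$ uniform in $\{0,1\}^n$, $\pi$ uniform in $\mathcal{S}_J$. *)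

theory Defs
  imports Complex_Main "HOL-Combinatorics.Permutations"
begin

text \<open>The cube {0,1}^n, coordinates indexed by [n] = {0..<n}; points are
  boolean functions on nat that vanish outside {0..<n}.\<close>
definition cube :: "nat \<Rightarrow> (nat \<Rightarrow> bool) set" where
  "cube n = {x. \<forall>i\<ge>n. \<not> x i}"

text \<open>pi x: the pi(i)-th coordinate of pi x is x_i, i.e. (pi x) j = x (inv pi j).\<close>
definition perm_act :: "(nat \<Rightarrow> nat) \<Rightarrow> (nat \<Rightarrow> bool) \<Rightarrow> (nat \<Rightarrow> bool)" where
  "perm_act \<pi> x = (\<lambda>j. x (inv \<pi> j))"

definition J_symmetric :: "nat \<Rightarrow> nat set \<Rightarrow> ((nat \<Rightarrow> bool) \<Rightarrow> bool) \<Rightarrow> bool" where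
  "J_symmetric n J g \<longleftrightarrow>
     (\<forall>x\<in>cube n. \<forall>\<pi>. \<pi> permutes J \<longrightarrow> g (perm_act \<pi> x) = g x)"

definition t_symmetric :: "nat \<Rightarrow> nat \<Rightarrow> ((nat \<Rightarrow> bool) \<Rightarrow> bool) \<Rightarrow> bool" where
  "t_symmetric n t g \<longleftrightarrow> (\<exists>J. J \<subseteq> {..<n} \<and> card J \<ge> t \<and> J_symmetric n J g)"

definition disagree :: "nat \<Rightarrow> ((nat \<Rightarrow> bool) \<Rightarrow> bool) \<Rightarrow> ((nat \<Rightarrow> bool) \<Rightarrow> bool) \<Rightarrow> real" where
  "disagree n f g = real (card {x\<in>cube n. f x \<noteq> g x}) / real (card (cube n))"

definition far_from_t_symmetric ::
  "nat \<Rightarrow> real \<Rightarrow> nat \<Rightarrow> ((nat \<Rightarrow> bool) \<Rightarrow> bool) \<Rightarrow> bool" where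
  "far_from_t_symmetric n \<epsilon> t f \<longleftrightarrow> (\<forall>g. t_symmetric n t g \<longrightarrow> disagree n f g \<ge> \<epsilon>)"

definition SymInf :: "nat \<Rightarrow> ((nat \<Rightarrow> bool) \<Rightarrow> bool) \<Rightarrow> nat set \<Rightarrow> real" where
  "SymInf n f J =
     real (card {(x, \<pi>). x \<in> cube n \<and> \<pi> permutes J \<and> f x \<noteq> f (perm_act \<pi> x)})
     / (real (card (cube n)) * real (card {\<pi>. \<pi> permutes J}))"

end

theory Submission
  imports Defs
begin

lemma pa_comp:
  assumes "bij \<pi>" "bij \<sigma>"
  shows "perm_act \<pi> (perm_act \<sigma> y) = perm_act (\<pi> \<circ> \<sigma>) y"
  using assms by (simp add: perm_act_def o_inv_distrib bij_is_inj bij_is_surj)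

lemma pa_id: "perm_act id y = y"
  by (simp add: perm_act_def inv_id)

lemma pa_cube:
  assumes "\<sigma> permutes J" "J \<subseteq> {..<n}" "y \<in> cube n"
  shows "perm_act \<sigma> y \<in> cube n"
proof -
  have "inv \<sigma> permutes J" using assms(1) by (rule permutes_inv)
  then have "\<And>i. i \<ge> n \<Longrightarrow> inv \<sigma> i = i" using assms(2)
    by (meson lessThan_iff not_le permutes_not_in subset_iff)
  then show ?thesis using assms(3) by (auto simp: cube_def perm_act_def)
qed

lemma pa_bij:
  assumes "\<sigma> permutes J" "J \<subseteq> {..<n}"
  shows "bij_betw (perm_act \<sigma>) (cube n) (cube n)"
proof (rule bij_betw_byWitness[where f'="perm_act (inv \<sigma>)"])
  have b: "bij \<sigma>" "bij (inv \<sigma>)" using assms(1) permutes_bij permutes_inv by blast+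
  have ip: "inv \<sigma> permutes J" using assms(1) by (rule permutes_inv)
  show "\<forall>a\<in>cube n. perm_act (inv \<sigma>) (perm_act \<sigma> a) = a"
    using b by (simp add: pa_comp pa_id bij_is_inj)
  show "\<forall>a\<in>cube n. perm_act \<sigma> (perm_act (inv \<sigma>) a) = a"
    using b by (simp add: pa_comp pa_id bij_is_surj surj_iff[THEN iffD1])
  show "perm_act \<sigma> ` cube n \<subseteq> cube n" using pa_cube assms by blast
  show "perm_act (inv \<sigma>) ` cube n \<subseteq> cube n" using pa_cube ip assms by blast
qed

lemma comp_bij:
  assumes "\<sigma> permutes J"
  shows "bij_betw (\<lambda>\<pi>. \<pi> \<circ> \<sigma>) {\<pi>. \<pi> permutes J} {\<pi>. \<pi> permutes J}"
proof (rule bij_betw_byWitness[where f'="\<lambda>\<pi>. \<pi> \<circ> inv \<sigma>"])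
  have b: "bij \<sigma>" using assms permutes_bij by blast
  show "\<forall>a\<in>{\<pi>. \<pi> permutes J}. a \<circ> \<sigma> \<circ> inv \<sigma> = a"
    using b by (simp add: o_assoc[symmetric] bij_is_surj surj_iff[THEN iffD1])
  show "\<forall>a\<in>{\<pi>. \<pi> permutes J}. a \<circ> inv \<sigma> \<circ> \<sigma> = a"
    using b by (simp add: o_assoc[symmetric] bij_is_inj inj_iff[THEN iffD1])
  show "(\<lambda>\<pi>. \<pi> \<circ> \<sigma>) ` {\<pi>. \<pi> permutes J} \<subseteq> {\<pi>. \<pi> permutes J}"
    using assms permutes_compose by blast
  show "(\<lambda>\<pi>. \<pi> \<circ> inv \<sigma>) ` {\<pi>. \<pi> permutes J} \<subseteq> {\<pi>. \<pi> permutes J}"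
    using assms permutes_compose permutes_inv by blast
qed

lemma card_ind: "finite A \<Longrightarrow> real (card {x\<in>A. P x}) = (\<Sum>x\<in>A. if P x then 1 else 0)"
  by (simp add: sum.inter_filter[symmetric])

theorem corollary1:
  fixes n t :: nat and \<epsilon> :: real and f :: "(nat \<Rightarrow> bool) \<Rightarrow> bool" and J :: "nat set"
  assumes "far_from_t_symmetric n \<epsilon> t f"
    and "J \<subseteq> {..<n}" and "card J \<ge> t"
  shows "SymInf n f J \<ge> \<epsilon>"
proof -
  define C where "C = cube n"
  define P where "P = {\<pi>. \<pi> permutes J}"
  define ind :: "bool \<Rightarrow> real" where "ind b = (if b then 1 else 0)" for b
  define N where "N = real (card P)"
  define A where "A y = (\<Sum>\<sigma>\<in>P. ind (f (perm_act \<sigma> y)))" for y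
  define g where "g y = (2 * A y \<ge> N)" for y
  have finJ: "finite J" using assms(2) finite_subset by blast
  have finP: "finite P" unfolding P_def using finJ finite_permutations by blast
  have finC: "finite C"
  proof -
    have "C \<subseteq> (\<lambda>S x. x \<in> S) ` Pow {..<n}"
    proof
      fix x assume "x \<in> C"
      then have "x = (\<lambda>i. i \<in> {i. x i})" "{i. x i} \<in> Pow {..<n}"
        by (auto simp: C_def cube_def) (meson not_le)
      then show "x \<in> (\<lambda>S x. x \<in> S) ` Pow {..<n}" by blast
    qed
    then show ?thesis by (rule finite_subset) simp
  qed
  have Cne: "C \<noteq> {}" unfolding C_def cube_def by auto
  have Pne: "id \<in> P" unfolding P_def by (simp add: permutes_id)
  have Npos: "N > 0" unfolding N_def using finP Pne card_gt_0_iff by fastforce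
  have Cpos: "real (card C) > 0" using finC Cne card_gt_0_iff by fastforce
  have bijP: "\<And>\<sigma>. \<sigma> \<in> P \<Longrightarrow> bij \<sigma>" unfolding P_def using permutes_bij by blast
  have APN: "0 \<le> A y \<and> A y \<le> N" for y
  proof -
    have "A y \<le> (\<Sum>\<sigma>\<in>P. 1)" unfolding A_def ind_def by (rule sum_mono) auto
    then show ?thesis unfolding N_def A_def ind_def by (auto intro: sum_nonneg)
  qed
  have Ainv: "A (perm_act \<pi> y) = A y" if "\<pi> \<in> P" for \<pi> y
  proof -
    have "A y = (\<Sum>\<sigma>\<in>P. ind (f (perm_act (\<sigma> \<circ> \<pi>) y)))"
      unfolding A_def using sum.reindex_bij_betw[OF comp_bij[of \<pi> J], of "\<lambda>\<sigma>. ind (f (perm_act \<sigma> y))"]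
        that by (simp add: P_def)
    also have "\<dots> = A (perm_act \<pi> y)" unfolding A_def
      using that bijP by (intro sum.cong) (auto simp: pa_comp)
    finally show ?thesis by simp
  qed
  have gsym: "J_symmetric n J g"
    unfolding J_symmetric_def g_def using Ainv by (auto simp: P_def)
  have gt: "t_symmetric n t g" unfolding t_symmetric_def using gsym assms(2,3) by blast
  have eps: "\<epsilon> \<le> disagree n f g" using assms(1) gt unfolding far_from_t_symmetric_def by blast
  define S where "S = (\<Sum>x\<in>C. \<Sum>\<pi>\<in>P. ind (f x \<noteq> f (perm_act \<pi> x)))"
  define D where "D = (\<Sum>x\<in>C. ind (f x \<noteq> g x))"
  have Sset: "real (card {(x, \<pi>). x \<in> cube n \<and> \<pi> permutes J \<and> f x \<noteq> f (perm_act \<pi> x)}) = S"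
  proof -
    have "{(x, \<pi>). x \<in> cube n \<and> \<pi> permutes J \<and> f x \<noteq> f (perm_act \<pi> x)}
          = Sigma C (\<lambda>x. {\<pi>\<in>P. f x \<noteq> f (perm_act \<pi> x)})" by (auto simp: C_def P_def)
    then have "card {(x, \<pi>). x \<in> cube n \<and> \<pi> permutes J \<and> f x \<noteq> f (perm_act \<pi> x)}
       = (\<Sum>x\<in>C. card {\<pi>\<in>P. f x \<noteq> f (perm_act \<pi> x)})"
      using finC finP by (simp add: card_SigmaI)
    then show ?thesis unfolding S_def ind_def using finP by (simp add: card_ind)
  qed
  have SymEq: "SymInf n f J = S / (real (card C) * N)"
    unfolding SymInf_def Sset by (simp add: C_def N_def P_def)
  have disEq: "disagree n f g = D / real (card C)"
    unfolding disagree_def D_def ind_def using finC by (simp add: card_ind C_def)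
  have inner: "(\<Sum>\<sigma>\<in>P. \<Sum>\<tau>\<in>P. ind (f (perm_act \<sigma> y) \<noteq> f (perm_act \<tau> y))) = 2 * A y * (N - A y)" for y
  proof -
    have e: "ind (a \<noteq> b) = ind a * (1 - ind b) + (1 - ind a) * ind b" for a b
      unfolding ind_def by auto
    have "(\<Sum>\<sigma>\<in>P. \<Sum>\<tau>\<in>P. ind (f (perm_act \<sigma> y) \<noteq> f (perm_act \<tau> y)))
       = (\<Sum>\<sigma>\<in>P. ind (f (perm_act \<sigma> y)) * (N - A y) + (1 - ind (f (perm_act \<sigma> y))) * A y)"
      unfolding e sum.distrib sum_distrib_left[symmetric] sum_subtractf A_def N_def by simp
    also have "\<dots> = A y * (N - A y) + (N - A y) * A y"
      unfolding sum.distrib sum_distrib_right[symmetric] sum_subtractf A_def N_def by simp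
    finally show ?thesis by simp
  qed
  have NS: "N * S = (\<Sum>y\<in>C. 2 * A y * (N - A y))"
  proof -
    have "N * S = (\<Sum>\<sigma>\<in>P. S)" unfolding N_def by simp
    also have "\<dots> = (\<Sum>\<sigma>\<in>P. \<Sum>y\<in>C. \<Sum>\<pi>\<in>P. ind (f (perm_act \<sigma> y) \<noteq> f (perm_act \<pi> (perm_act \<sigma> y))))"
    proof (rule sum.cong[OF refl])
      fix \<sigma> assume "\<sigma> \<in> P"
      then have "bij_betw (perm_act \<sigma>) C C" using pa_bij assms(2) by (auto simp: P_def C_def)
      then show "S = (\<Sum>y\<in>C. \<Sum>\<pi>\<in>P. ind (f (perm_act \<sigma> y) \<noteq> f (perm_act \<pi> (perm_act \<sigma> y))))"
        unfolding S_def using sum.reindex_bij_betw[OF \<open>bij_betw (perm_act \<sigma>) C C\<close>,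
          of "\<lambda>x. \<Sum>\<pi>\<in>P. ind (f x \<noteq> f (perm_act \<pi> x))"] by simp
    qed
    also have "\<dots> = (\<Sum>\<sigma>\<in>P. \<Sum>y\<in>C. \<Sum>\<tau>\<in>P. ind (f (perm_act \<sigma> y) \<noteq> f (perm_act \<tau> y)))"
    proof (rule sum.cong[OF refl], rule sum.cong[OF refl])
      fix \<sigma> y assume s: "\<sigma> \<in> P"
      have "(\<Sum>\<pi>\<in>P. ind (f (perm_act \<sigma> y) \<noteq> f (perm_act \<pi> (perm_act \<sigma> y))))
          = (\<Sum>\<pi>\<in>P. ind (f (perm_act \<sigma> y) \<noteq> f (perm_act (\<pi> \<circ> \<sigma>) y)))"
        using s bijP by (intro sum.cong) (auto simp: pa_comp)
      also have "\<dots> = (\<Sum>\<tau>\<in>P. ind (f (perm_act \<sigma> y) \<noteq> f (perm_act \<tau> y)))"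
        using sum.reindex_bij_betw[OF comp_bij[of \<sigma> J], of "\<lambda>\<tau>. ind (f (perm_act \<sigma> y) \<noteq> f (perm_act \<tau> y))"]
          s by (simp add: P_def)
      finally show "(\<Sum>\<pi>\<in>P. ind (f (perm_act \<sigma> y) \<noteq> f (perm_act \<pi> (perm_act \<sigma> y))))
          = (\<Sum>\<tau>\<in>P. ind (f (perm_act \<sigma> y) \<noteq> f (perm_act \<tau> y)))" .
    qed
    also have "\<dots> = (\<Sum>y\<in>C. \<Sum>\<sigma>\<in>P. \<Sum>\<tau>\<in>P. ind (f (perm_act \<sigma> y) \<noteq> f (perm_act \<tau> y)))"
      by (rule sum.swap)
    finally show ?thesis using inner by simp
  qed
  have ND: "N * D = (\<Sum>y\<in>C. min (A y) (N - A y))"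
  proof -
    have "N * D = (\<Sum>\<sigma>\<in>P. D)" unfolding N_def by simp
    also have "\<dots> = (\<Sum>\<sigma>\<in>P. \<Sum>y\<in>C. ind (f (perm_act \<sigma> y) \<noteq> g y))"
    proof (rule sum.cong[OF refl])
      fix \<sigma> assume s: "\<sigma> \<in> P"
      then have "bij_betw (perm_act \<sigma>) C C" using pa_bij assms(2) by (auto simp: P_def C_def)
      then have "D = (\<Sum>y\<in>C. ind (f (perm_act \<sigma> y) \<noteq> g (perm_act \<sigma> y)))"
        unfolding D_def using sum.reindex_bij_betw[OF \<open>bij_betw (perm_act \<sigma>) C C\<close>,
          of "\<lambda>x. ind (f x \<noteq> g x)"] by simp
      also have "\<dots> = (\<Sum>y\<in>C. ind (f (perm_act \<sigma> y) \<noteq> g y))"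
        using s Ainv by (simp add: g_def)
      finally show "D = (\<Sum>y\<in>C. ind (f (perm_act \<sigma> y) \<noteq> g y))" .
    qed
    also have "\<dots> = (\<Sum>y\<in>C. \<Sum>\<sigma>\<in>P. ind (f (perm_act \<sigma> y) \<noteq> g y))" by (rule sum.swap)
    also have "\<dots> = (\<Sum>y\<in>C. min (A y) (N - A y))"
    proof (rule sum.cong[OF refl])
      fix y
      have e: "ind (a \<noteq> b) = (if b then 1 - ind a else ind a)" for a b
        unfolding ind_def by auto
      show "(\<Sum>\<sigma>\<in>P. ind (f (perm_act \<sigma> y) \<noteq> g y)) = min (A y) (N - A y)"
        unfolding e by (cases "g y") (auto simp: sum_subtractf A_def[symmetric] N_def g_def)
    qed
    finally show ?thesis .
  qed
  have "N * D \<le> N * S / N"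
  proof -
    have "N * min (A y) (N - A y) \<le> 2 * A y * (N - A y)" for y
    proof -
      have "0 \<le> A y" "A y \<le> N" using APN by auto
      show ?thesis
      proof (cases "A y \<le> N - A y")
        case True
        then have "N * A y \<le> (2 * (N - A y)) * A y" using \<open>0 \<le> A y\<close>
          by (intro mult_right_mono) auto
        then show ?thesis using True by (simp add: min_def algebra_simps)
      next
        case False
        then have "N * (N - A y) \<le> (2 * A y) * (N - A y)" using \<open>A y \<le> N\<close>
          by (intro mult_right_mono) auto
        then show ?thesis using False by (simp add: min_def algebra_simps)
      qed
    qed
    then have "N * (N * D) \<le> N * S" unfolding ND NS sum_distrib_left by (intro sum_mono) auto
    then show ?thesis using Npos by (simp add: field_simps)
  qed
  then have "D \<le> S / N" using Npos by (simp add: field_simps)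
  then have "D / real (card C) \<le> S / (real (card C) * N)"
    using Cpos Npos by (simp add: field_simps)
  then show ?thesis using eps SymEq disEq by simp
qed

end
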